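(* Let $S=\{1,2\}$ and $N=\{1,\ldots,n\}$, and identify each belief with the probability it assigns to state $1$. Given individual beliefs $p_1,\ldots,p_n\in[0,1]$, the parimutuel equilibrium price (identified with the price/probability of state 1) of the parimutuel market with equal wealth is \[\mathrm{med}\Big(p_1,\ldots,p_n,\tfrac{1}{n},\tfrac{2}{n},\ldots,\tfrac{n-1}{n}\Big).\]
   Context: For an odd number $m$ of reals $x_1,\ldots,x_m$, $\mathrm{med}(x_1,\ldots,x_m)$ is the value $x^*$ among them with $|\{i:x_i<x^*\}|\le\frac{m-1}{2}$ and $|\{i:x_i>x^*\}|\le\frac{m-1}{2}$. The parimutuel market has consumers $i\in N$, each with consumption set $\mathbb{R}^S_+$ and linear utility $x\mapsto p_i\cdot x$ (where $p_i$ is identified with the vector $(p_i,1-p_i)$). A parimutuel equilibrium with equal wealth is a pair $(\rho,\mathbf{x})$ with $\rho\in\Delta(S)$ and $\mathbf{x}=(x_1,\ldots,x_n)\in(\mathbb{R}^S_+)^N$ such that (1) for each $i$, $\rho\cdot x_i\le 1/n$ and $p_i\cdot x_i\ge p_i\cdot y$ for every $y\in\mathbb{R}^S_+$ with $\rho\cdot y\le 1/n$; and (2) $\sum_i x_i=(1,1)$. The parimutuel price is the $\rho$ of such an equilibrium. *)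

theory Defs
  imports Main Complex_Main
begin

text \<open>Vectors in R^S with S = {1,2} are represented as pairs (state 1, state 2).\<close>

definition dotp :: "real \<times> real \<Rightarrow> real \<times> real \<Rightarrow> real" where
  "dotp a b = fst a * fst b + snd a * snd b"

definition nonneg2 :: "real \<times> real \<Rightarrow> bool" where
  "nonneg2 a \<longleftrightarrow> fst a \<ge> 0 \<and> snd a \<ge> 0"

definition is_med :: "real list \<Rightarrow> real \<Rightarrow> bool" where
  "is_med xs v \<longleftrightarrow> v \<in> set xs
     \<and> card {i. i < length xs \<and> xs ! i < v} \<le> (length xs - 1) div 2
     \<and> card {i. i < length xs \<and> xs ! i > v} \<le> (length xs - 1) div 2"

definition med :: "real list \<Rightarrow> real" where
  "med xs = (THE v. is_med xs v)"

definition parimutuel_eq ::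
  "nat \<Rightarrow> (nat \<Rightarrow> real) \<Rightarrow> real \<times> real \<Rightarrow> (nat \<Rightarrow> real \<times> real) \<Rightarrow> bool" where
  "parimutuel_eq n p \<rho> x \<longleftrightarrow>
     nonneg2 \<rho> \<and> fst \<rho> + snd \<rho> = 1
     \<and> (\<forall>i\<in>{1..n}. nonneg2 (x i) \<and> dotp \<rho> (x i) \<le> 1 / real n
          \<and> (\<forall>y. nonneg2 y \<and> dotp \<rho> y \<le> 1 / real n
                 \<longrightarrow> dotp (p i, 1 - p i) y \<le> dotp (p i, 1 - p i) (x i)))
     \<and> (\<Sum>i=1..n. fst (x i)) = 1 \<and> (\<Sum>i=1..n. snd (x i)) = 1"

end

theory Submission
  imports Defs
begin

lemma len_filter_or:
  assumes "\<forall>x\<in>set xs. P x \<or> Q x"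
  shows "length xs \<le> length (filter P xs) + length (filter Q xs)"
  using assms by (induction xs) auto

lemma med_unique:
  assumes "is_med xs v" "is_med xs w" "odd (length xs)"
  shows "v = w"
proof (rule ccontr)
  assume ne: "v \<noteq> w"
  have key: "\<And>v w. is_med xs v \<Longrightarrow> is_med xs w \<Longrightarrow> v < w \<Longrightarrow> False"
  proof -
    fix v w assume a: "is_med xs v" "is_med xs w" "v < w"
    have "length xs \<le> length (filter (\<lambda>x. x > v) xs) + length (filter (\<lambda>x. x < w) xs)"
      using a(3) by (intro len_filter_or) auto
    also have "\<dots> \<le> (length xs - 1) div 2 + (length xs - 1) div 2"
    proof -
      have "card {i. i < length xs \<and> xs ! i > v} \<le> (length xs - 1) div 2"
        using a(1) unfolding is_med_def by blast
      moreover have "card {i. i < length xs \<and> xs ! i < w} \<le> (length xs - 1) div 2"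
        using a(2) unfolding is_med_def by blast
      ultimately show ?thesis unfolding length_filter_conv_card by (rule add_mono)
    qed
    finally have "length xs \<le> (length xs - 1) div 2 + (length xs - 1) div 2" .
    moreover obtain q where "length xs = 2*q+1" using assms(3) oddE by blast
    ultimately show False by simp
  qed
  show False
    using ne key[OF assms(1,2)] key[OF assms(2,1)] by linarith
qed

lemma len_filter_sort: "length (filter P (sort xs)) = length (filter P xs)"
  by (simp add: filter_sort)

lemma med_exists:
  assumes "length xs = 2*k+1"
  shows "is_med xs (sort xs ! k)"
proof -
  let ?s = "sort xs" let ?v = "?s ! k"
  have ls: "length ?s = 2*k+1" using assms by simp
  have srt: "sorted ?s" by simp
  have "length (filter (\<lambda>x. x < ?v) ?s) = length (filter (\<lambda>x. x < ?v) xs)"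
    by (rule len_filter_sort)
  then have "card {i. i < length xs \<and> xs ! i < ?v} = card {i. i < length ?s \<and> ?s ! i < ?v}"
    unfolding length_filter_conv_card by simp
  also have "\<dots> \<le> card {0..<k}"
  proof (rule card_mono)
    show "{i. i < length ?s \<and> ?s ! i < ?v} \<subseteq> {0..<k}"
    proof
      fix i assume "i \<in> {i. i < length ?s \<and> ?s ! i < ?v}"
      then have "i < length ?s" "?s ! i < ?v" by auto
      then have "\<not> k \<le> i" using sorted_nth_mono[OF srt, of k i] by auto
      then show "i \<in> {0..<k}" by simp
    qed
  qed simp
  finally have 1: "card {i. i < length xs \<and> xs ! i < ?v} \<le> k" by simp
  have "length (filter (\<lambda>x. x > ?v) ?s) = length (filter (\<lambda>x. x > ?v) xs)"
    by (rule len_filter_sort)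
  then have "card {i. i < length xs \<and> xs ! i > ?v} = card {i. i < length ?s \<and> ?s ! i > ?v}"
    unfolding length_filter_conv_card by simp
  also have "\<dots> \<le> card {k<..<2*k+1}"
  proof (rule card_mono)
    show "{i. i < length ?s \<and> ?s ! i > ?v} \<subseteq> {k<..<2*k+1}"
    proof
      fix i assume "i \<in> {i. i < length ?s \<and> ?s ! i > ?v}"
      then have "i < length ?s" "?s ! i > ?v" by auto
      then have "\<not> i \<le> k" using sorted_nth_mono[OF srt, of i k] ls by auto
      then show "i \<in> {k<..<2*k+1}" using \<open>i < length ?s\<close> ls by simp
    qed
  qed simp
  finally have 2: "card {i. i < length xs \<and> xs ! i > ?v} \<le> k" by simp
  have "k < length ?s" using ls by simp
  then have "?v \<in> set ?s" by (rule nth_mem)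
  then have "?v \<in> set xs" by simp
  then show ?thesis unfolding is_med_def using 1 2 assms by simp
qed


lemma opt_hi:
  fixes r p u w c :: real
  assumes "0 \<le> r" "r < p" "p \<le> 1" "u \<ge> 0" "w \<ge> 0" "r*u + (1-r)*w \<le> c" "c > 0"
    and opt: "\<And>y1 y2. y1 \<ge> 0 \<Longrightarrow> y2 \<ge> 0 \<Longrightarrow> r*y1 + (1-r)*y2 \<le> c \<Longrightarrow> p*y1 + (1-p)*y2 \<le> p*u + (1-p)*w"
  shows "r > 0 \<and> r*u \<ge> c"
proof -
  have pp: "p > 0" using assms by linarith
  have rpos: "r > 0"
  proof (rule ccontr)
    assume "\<not> r > 0" then have r0: "r = 0" using assms by linarith
    define t where "t = (p*u + (1-p)*w + 1) / p"
    have "t * p = p*u + (1-p)*w + 1" unfolding t_def using pp by simp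
    moreover have "t \<ge> 0"
    proof -
      have "p*u + (1-p)*w + 1 \<ge> 0"
        using assms mult_nonneg_nonneg[of p u] mult_nonneg_nonneg[of "1-p" w] pp by linarith
      then show ?thesis unfolding t_def using pp by simp
    qed
    moreover have "p*t + (1-p)*0 \<le> p*u + (1-p)*w"
      using opt[of t 0] r0 assms(7) \<open>t \<ge> 0\<close> by simp
    ultimately show False by (simp add: mult.commute)
  qed
  have "p*(c/r) + (1-p)*0 \<le> p*u + (1-p)*w"
    using opt[of "c/r" 0] rpos assms(7) by simp
  then have h1: "p*c \<le> r*(p*u + (1-p)*w)"
    using rpos by (simp add: field_simps)
  have h2: "p*(r*u + (1-r)*w) \<le> p*c" using assms(6) pp by simp
  have "w*(r-p) \<ge> 0" using h1 h2 by (simp add: algebra_simps)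
  moreover have "w > 0 \<Longrightarrow> w*(r-p) < 0" using assms(2) by (simp add: mult_pos_neg)
  ultimately have w0: "w = 0" using assms(5) by linarith
  then have "p*c \<le> p*(r*u)" using h1 by (simp add: algebra_simps)
  then have "c \<le> r*u" using pp by simp
  then show ?thesis using rpos by simp
qed

lemma opt_lo:
  fixes r p u w c :: real
  assumes "r \<le> 1" "p < r" "0 \<le> p" "u \<ge> 0" "w \<ge> 0" "r*u + (1-r)*w \<le> c" "c > 0"
    and opt: "\<And>y1 y2. y1 \<ge> 0 \<Longrightarrow> y2 \<ge> 0 \<Longrightarrow> r*y1 + (1-r)*y2 \<le> c \<Longrightarrow> p*y1 + (1-p)*y2 \<le> p*u + (1-p)*w"
  shows "r < 1 \<and> (1-r)*w \<ge> c"
proof -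
  have "(1-r) > 0 \<and> (1-r)*w \<ge> c"
  proof (rule opt_hi[of "1-r" "1-p" w u c])
    show "(1-r)*w + (1-(1-r))*u \<le> c" using assms(6) by (simp add: algebra_simps)
    fix y1 y2 :: real assume "y1 \<ge> 0" "y2 \<ge> 0" "(1-r)*y1 + (1-(1-r))*y2 \<le> c"
    then have "p*y2 + (1-p)*y1 \<le> p*u + (1-p)*w" using opt[of y2 y1] by (simp add: algebra_simps)
    then show "(1-p)*y1 + (1-(1-p))*y2 \<le> (1-p)*w + (1-(1-p))*u" by (simp add: algebra_simps)
  qed (use assms in auto)
  then show ?thesis by simp
qed


lemma eq_imp_star:
  assumes n1: "n \<ge> 1" and pb: "\<forall>i\<in>{1..n}. 0 \<le> p i \<and> p i \<le> 1"
    and eq: "parimutuel_eq n p \<rho> x"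
  shows "0 \<le> fst \<rho> \<and> fst \<rho> \<le> 1
    \<and> real (card {i\<in>{1..n}. p i > fst \<rho>}) \<le> real n * fst \<rho>
    \<and> real (card {i\<in>{1..n}. p i < fst \<rho>}) \<le> real n * (1 - fst \<rho>)"
proof -
  obtain r s where rs: "\<rho> = (r, s)" by fastforce
  define c where "c = 1 / real n"
  have cpos: "c > 0" using n1 unfolding c_def by simp
  have r0: "0 \<le> r" and r1: "r \<le> 1" and s: "s = 1 - r"
    using eq rs unfolding parimutuel_eq_def nonneg2_def by auto
  have sum1: "(\<Sum>i=1..n. fst (x i)) = 1" and sum2: "(\<Sum>i=1..n. snd (x i)) = 1"
    using eq unfolding parimutuel_eq_def by auto
  have cons: "fst (x i) \<ge> 0 \<and> snd (x i) \<ge> 0 \<and> r * fst (x i) + (1-r) * snd (x i) \<le> c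
     \<and> (\<forall>y1 y2. y1 \<ge> 0 \<longrightarrow> y2 \<ge> 0 \<longrightarrow> r*y1 + (1-r)*y2 \<le> c \<longrightarrow>
          p i * y1 + (1 - p i) * y2 \<le> p i * fst (x i) + (1 - p i) * snd (x i))"
    if "i \<in> {1..n}" for i
  proof -
    have h: "nonneg2 (x i) \<and> dotp \<rho> (x i) \<le> 1 / real n
          \<and> (\<forall>y. nonneg2 y \<and> dotp \<rho> y \<le> 1 / real n
                 \<longrightarrow> dotp (p i, 1 - p i) y \<le> dotp (p i, 1 - p i) (x i))"
      using eq that unfolding parimutuel_eq_def by blast
    show ?thesis
    proof (intro conjI allI impI)
      fix y1 y2 :: real assume "y1 \<ge> 0" "y2 \<ge> 0" "r*y1 + (1-r)*y2 \<le> c"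
      then show "p i * y1 + (1 - p i) * y2 \<le> p i * fst (x i) + (1 - p i) * snd (x i)"
        using h[THEN conjunct2, THEN conjunct2, rule_format, of "(y1, y2)"] rs s
        unfolding dotp_def nonneg2_def c_def by simp
    qed (use h rs s in \<open>auto simp: dotp_def nonneg2_def c_def\<close>)
  qed
  let ?A = "{i\<in>{1..n}. p i > r}"
  let ?B = "{i\<in>{1..n}. p i < r}"
  have hiA: "r > 0 \<and> r * fst (x i) \<ge> c" if "i \<in> ?A" for i
  proof -
    have i: "i \<in> {1..n}" "r < p i" using that by auto
    show ?thesis
      using opt_hi[of r "p i" "fst (x i)" "snd (x i)" c] cons[OF i(1)] pb i r0 cpos by auto
  qed
  have loB: "r < 1 \<and> (1 - r) * snd (x i) \<ge> c" if "i \<in> ?B" for i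
  proof -
    have i: "i \<in> {1..n}" "p i < r" using that by auto
    show ?thesis
      using opt_lo[of r "p i" "fst (x i)" "snd (x i)" c] cons[OF i(1)] pb i r1 cpos by auto
  qed
  have a: "real (card ?A) \<le> real n * r"
  proof (cases "?A = {}")
    case True then show ?thesis using r0 by (simp only: card.empty) simp
  next
    case False
    then obtain i0 where "i0 \<in> ?A" by blast
    then have rpos: "r > 0" using hiA by blast
    have "real (card ?A) * (c / r) = (\<Sum>i\<in>?A. c / r)" by simp
    also have "\<dots> \<le> (\<Sum>i\<in>?A. fst (x i))"
    proof (rule sum_mono)
      fix i assume "i \<in> ?A"
      then show "c / r \<le> fst (x i)" using hiA[of i] rpos by (simp add: divide_le_eq mult.commute)
    qed
    also have "\<dots> \<le> (\<Sum>i=1..n. fst (x i))"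
      by (rule sum_mono2) (use cons in auto)
    finally have "real (card ?A) * (c / r) \<le> 1" using sum1 by simp
    then have "real (card ?A) * c \<le> r" using rpos by (simp add: field_simps)
    then show ?thesis using n1 unfolding c_def by (simp add: field_simps)
  qed
  have b: "real (card ?B) \<le> real n * (1 - r)"
  proof (cases "?B = {}")
    case True then show ?thesis using r1 by (simp only: card.empty) simp
  next
    case False
    then obtain i0 where "i0 \<in> ?B" by blast
    then have rpos: "1 - r > 0" using loB by auto
    have "real (card ?B) * (c / (1-r)) = (\<Sum>i\<in>?B. c / (1-r))" by simp
    also have "\<dots> \<le> (\<Sum>i\<in>?B. snd (x i))"
    proof (rule sum_mono)
      fix i assume "i \<in> ?B"
      then show "c / (1-r) \<le> snd (x i)" using loB[of i] rpos by (simp add: divide_le_eq mult.commute)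
    qed
    also have "\<dots> \<le> (\<Sum>i=1..n. snd (x i))"
      by (rule sum_mono2) (use cons in auto)
    finally have "real (card ?B) * (c / (1-r)) \<le> 1" using sum2 by simp
    then have "real (card ?B) * c \<le> 1 - r" using rpos by (simp add: field_simps)
    then show ?thesis using n1 unfolding c_def by (simp add: field_simps)
  qed
  show ?thesis using a b r0 r1 rs by simp
qed


lemma opt_hi_suff:
  fixes r p y1 y2 c :: real
  assumes "0 < r" "r < p" "y1 \<ge> 0" "y2 \<ge> 0" "r*y1 + (1-r)*y2 \<le> c"
  shows "p*y1 + (1-p)*y2 \<le> p*(c/r) + (1-p)*0"
proof -
  have "p*(r*y1 + (1-r)*y2) - r*(p*y1 + (1-p)*y2) = (p-r)*y2" by (simp add: algebra_simps)
  moreover have "(p-r)*y2 \<ge> 0" using assms by simp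
  moreover have "p*(r*y1 + (1-r)*y2) \<le> p*c" using assms by simp
  ultimately have "r*(p*y1 + (1-p)*y2) \<le> p*c" by linarith
  then show ?thesis using assms(1) by (simp add: field_simps mult.commute)
qed

lemma opt_lo_suff:
  fixes r p y1 y2 c :: real
  assumes "r < 1" "p < r" "y1 \<ge> 0" "y2 \<ge> 0" "r*y1 + (1-r)*y2 \<le> c"
  shows "p*y1 + (1-p)*y2 \<le> p*0 + (1-p)*(c/(1-r))"
proof -
  have "(1-p)*y2 + (1-(1-p))*y1 \<le> (1-p)*(c/(1-r)) + (1-(1-p))*0"
    by (rule opt_hi_suff) (use assms in \<open>auto simp: algebra_simps\<close>)
  then show ?thesis by (simp add: algebra_simps)
qed


lemma star_imp_eq:
  assumes n1: "n \<ge> 1" and pb: "\<forall>i\<in>{1..n}. 0 \<le> p i \<and> p i \<le> 1"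
    and r0: "0 \<le> r" and r1: "r \<le> 1"
    and ha: "real (card {i\<in>{1..n}. p i > r}) \<le> real n * r"
    and hb: "real (card {i\<in>{1..n}. p i < r}) \<le> real n * (1 - r)"
  shows "\<exists>x. parimutuel_eq n p (r, 1 - r) x"
proof -
  define A where "A = {i\<in>{1..n}. p i > r}"
  define B where "B = {i\<in>{1..n}. p i < r}"
  define E where "E = {i\<in>{1..n}. p i = r}"
  define a where "a = real (card A)"
  define b where "b = real (card B)"
  define e where "e = real (card E)"
  define c where "c = 1 / real n"
  have nn: "real n > 0" using n1 by simp
  have cpos: "c > 0" using nn unfolding c_def by simp
  have ha': "a \<le> real n * r" using ha unfolding a_def A_def .
  have hb': "b \<le> real n * (1 - r)" using hb unfolding b_def B_def .
  have fin: "finite A" "finite B" "finite E" unfolding A_def B_def E_def by auto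
  have un: "{1..n} = A \<union> B \<union> E" unfolding A_def B_def E_def by auto
  have dis: "A \<inter> B = {}" "(A \<union> B) \<inter> E = {}" unfolding A_def B_def E_def by auto
  have card_sum: "a + b + e = real n"
  proof -
    have "card (A \<union> B \<union> E) = card A + card B + card E"
      using fin dis by (simp add: card_Un_disjoint)
    then have "card {1..n} = card A + card B + card E" using un by simp
    then show ?thesis unfolding a_def b_def e_def by simp
  qed
  have a0: "a \<ge> 0" "b \<ge> 0" "e \<ge> 0" unfolding a_def b_def e_def by auto
  have Aimp: "r > 0" if "A \<noteq> {}"
  proof -
    have "card A \<ge> 1" using that fin by (simp add: Suc_le_eq card_gt_0_iff)
    then have "a \<ge> 1" unfolding a_def by simp
    then show ?thesis using ha' r0 nn by (smt (verit) mult_nonneg_nonpos)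
  qed
  have Bimp: "r < 1" if "B \<noteq> {}"
  proof -
    have "card B \<ge> 1" using that fin by (simp add: Suc_le_eq card_gt_0_iff)
    then have "b \<ge> 1" unfolding b_def by simp
    then show ?thesis using hb' r1 nn by (smt (verit) mult_nonneg_nonpos)
  qed
  have ida: "r * (1 - a / (real n * r)) = r - a / real n"
  proof (cases "r = 0")
    case True
    then have "a = 0" using ha' a0 by simp
    then show ?thesis using True by simp
  next
    case False then show ?thesis using nn by (simp add: field_simps)
  qed
  have idb: "(1 - r) * (1 - b / (real n * (1 - r))) = (1 - r) - b / real n"
  proof (cases "r = 1")
    case True
    then have "b = 0" using hb' a0 by simp
    then show ?thesis using True by simp
  next
    case False then show ?thesis using nn by (simp add: field_simps)
  qed
  have ga: "a / (real n * r) \<le> 1"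
  proof (cases "r = 0")
    case True then show ?thesis by simp
  next
    case False then show ?thesis using ha' r0 nn by (simp add: divide_le_eq)
  qed
  have gb: "b / (real n * (1 - r)) \<le> 1"
  proof (cases "r = 1")
    case True then show ?thesis by simp
  next
    case False then show ?thesis using hb' r1 nn by (simp add: divide_le_eq)
  qed
  define \<alpha> where "\<alpha> = c / r"
  define \<beta> where "\<beta> = c / (1 - r)"
  define \<gamma> where "\<gamma> = (1 - a / (real n * r)) / e"
  define \<delta> where "\<delta> = (1 - b / (real n * (1 - r))) / e"
  define x where "x = (\<lambda>i. if p i > r then (\<alpha>, 0) else if p i < r then (0, \<beta>) else (\<gamma>, \<delta>))"
  have nonneg: "\<alpha> \<ge> 0" "\<beta> \<ge> 0" "\<gamma> \<ge> 0" "\<delta> \<ge> 0"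
    unfolding \<alpha>_def \<beta>_def \<gamma>_def \<delta>_def using cpos r0 r1 ga gb a0 by auto
  have budgE: "r * \<gamma> + (1 - r) * \<delta> = c" if "E \<noteq> {}"
  proof -
    have "card E \<ge> 1" using that fin by (simp add: Suc_le_eq card_gt_0_iff)
    then have e1: "e \<ge> 1" unfolding e_def by simp
    have "r * \<gamma> + (1 - r) * \<delta> = (r * (1 - a / (real n * r)) + (1 - r) * (1 - b / (real n * (1 - r)))) / e"
      unfolding \<gamma>_def \<delta>_def by (simp only: times_divide_eq_right add_divide_distrib)
    also have "\<dots> = ((r - a / real n) + ((1 - r) - b / real n)) / e" by (simp only: ida idb)
    also have "(r - a / real n) + ((1 - r) - b / real n) = (real n - a - b) / real n"
      using nn by (simp add: field_simps)
    also have "real n - a - b = e" using card_sum by simp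
    also have "(e / real n) / e = c" using e1 unfolding c_def by simp
    finally show ?thesis .
  qed
  have sumA: "(\<Sum>i\<in>A. f i) = a * v" if "\<And>i. i \<in> A \<Longrightarrow> f i = v" for f :: "nat \<Rightarrow> real" and v
    using that unfolding a_def by simp
  have sumB: "(\<Sum>i\<in>B. f i) = b * v" if "\<And>i. i \<in> B \<Longrightarrow> f i = v" for f :: "nat \<Rightarrow> real" and v
    using that unfolding b_def by simp
  have sumE: "(\<Sum>i\<in>E. f i) = e * v" if "\<And>i. i \<in> E \<Longrightarrow> f i = v" for f :: "nat \<Rightarrow> real" and v
    using that unfolding e_def by simp
  have split: "(\<Sum>i=1..n. f i) = (\<Sum>i\<in>A. f i) + (\<Sum>i\<in>B. f i) + (\<Sum>i\<in>E. f i)" for f :: "nat \<Rightarrow> real"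
    using fin dis un by (simp add: sum.union_disjoint)
  have s1: "(\<Sum>i=1..n. fst (x i)) = a * \<alpha> + e * \<gamma>"
  proof -
    have "(\<Sum>i\<in>A. fst (x i)) = a * \<alpha>" by (rule sumA) (auto simp: x_def A_def)
    moreover have "(\<Sum>i\<in>B. fst (x i)) = b * 0" by (rule sumB) (auto simp: x_def B_def)
    moreover have "(\<Sum>i\<in>E. fst (x i)) = e * \<gamma>" by (rule sumE) (auto simp: x_def E_def)
    ultimately show ?thesis using split by simp
  qed
  have s2: "(\<Sum>i=1..n. snd (x i)) = b * \<beta> + e * \<delta>"
  proof -
    have "(\<Sum>i\<in>A. snd (x i)) = a * 0" by (rule sumA) (auto simp: x_def A_def)
    moreover have "(\<Sum>i\<in>B. snd (x i)) = b * \<beta>" by (rule sumB) (auto simp: x_def B_def)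
    moreover have "(\<Sum>i\<in>E. snd (x i)) = e * \<delta>" by (rule sumE) (auto simp: x_def E_def)
    ultimately show ?thesis using split by simp
  qed
  have tot: "a * \<alpha> + e * \<gamma> = 1 \<and> b * \<beta> + e * \<delta> = 1"
  proof (cases "e = 0")
    case False
    have "a * \<alpha> + e * \<gamma> = a / (real n * r) + (1 - a / (real n * r))"
      unfolding \<alpha>_def \<gamma>_def c_def using False by simp
    moreover have "b * \<beta> + e * \<delta> = b / (real n * (1 - r)) + (1 - b / (real n * (1 - r)))"
      unfolding \<beta>_def \<delta>_def c_def using False by simp
    ultimately show ?thesis by simp
  next
    case True
    then have ab: "a + b = real n" using card_sum by simp
    then have nra: "real n * r = a" using ha' hb' by (simp add: algebra_simps)
    then have nrb: "real n * (1 - r) = b" using ab by (simp add: algebra_simps)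
    have apos: "a > 0"
    proof (rule ccontr)
      assume "\<not> a > 0" then have "a = 0" using a0 by simp
      then have "r = 0" using nra nn by simp
      have "1 \<in> {1..n}" using n1 by simp
      then have "1 \<in> A \<union> B \<union> E" using un by blast
      moreover have "1 \<notin> A" using \<open>a = 0\<close> fin unfolding a_def by auto
      moreover have "1 \<notin> B" using pb \<open>r = 0\<close> \<open>1 \<in> {1..n}\<close> unfolding B_def by force
      moreover have "1 \<notin> E" using True fin unfolding e_def by auto
      ultimately show False by blast
    qed
    have bpos: "b > 0"
    proof (rule ccontr)
      assume "\<not> b > 0" then have "b = 0" using a0 by simp
      then have "r = 1" using nrb nn by simp
      have "1 \<in> {1..n}" using n1 by simp
      then have "1 \<in> A \<union> B \<union> E" using un by blast
      moreover have "1 \<notin> B" using \<open>b = 0\<close> fin unfolding b_def by auto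
      moreover have "1 \<notin> A" using pb \<open>r = 1\<close> \<open>1 \<in> {1..n}\<close> unfolding A_def by force
      moreover have "1 \<notin> E" using True fin unfolding e_def by auto
      ultimately show False by blast
    qed
    have "real n * r > 0" using nra apos by simp
    then have rpos: "r > 0" using nn by (simp add: zero_less_mult_iff)
    have "real n * (1 - r) > 0" using nrb bpos by simp
    then have rlt: "1 - r > 0" using nn by (simp add: zero_less_mult_iff)
    have "a * \<alpha> = 1" unfolding \<alpha>_def c_def using nra rpos nn apos by (simp add: field_simps)
    moreover have "b * \<beta> = 1" unfolding \<beta>_def c_def using nrb rlt nn bpos by (simp add: field_simps)
    ultimately show ?thesis using True by simp
  qed
  have cons: "nonneg2 (x i) \<and> dotp (r, 1 - r) (x i) \<le> 1 / real n
          \<and> (\<forall>y. nonneg2 y \<and> dotp (r, 1 - r) y \<le> 1 / real n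
                 \<longrightarrow> dotp (p i, 1 - p i) y \<le> dotp (p i, 1 - p i) (x i))"
    if i: "i \<in> {1..n}" for i
  proof (cases "p i > r")
    case True
    then have "A \<noteq> {}" using i unfolding A_def by auto
    then have rp: "r > 0" by (rule Aimp)
    have xi: "x i = (\<alpha>, 0)" using True unfolding x_def by simp
    show ?thesis
    proof (intro conjI allI impI)
      fix y :: "real \<times> real" assume y: "nonneg2 y \<and> dotp (r, 1 - r) y \<le> 1 / real n"
      obtain y1 y2 where yy: "y = (y1, y2)" by fastforce
      show "dotp (p i, 1 - p i) y \<le> dotp (p i, 1 - p i) (x i)"
        using opt_hi_suff[OF rp True, of y1 y2 c] y yy xi
        unfolding dotp_def nonneg2_def \<alpha>_def c_def by simp
    qed (use xi nonneg rp in \<open>auto simp: dotp_def nonneg2_def \<alpha>_def c_def\<close>)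
  next
    case False
    show ?thesis
    proof (cases "p i < r")
      case True
      then have "B \<noteq> {}" using i unfolding B_def by auto
      then have rp: "r < 1" by (rule Bimp)
      have xi: "x i = (0, \<beta>)" using True unfolding x_def by simp
      show ?thesis
      proof (intro conjI allI impI)
        fix y :: "real \<times> real" assume y: "nonneg2 y \<and> dotp (r, 1 - r) y \<le> 1 / real n"
        obtain y1 y2 where yy: "y = (y1, y2)" by fastforce
        show "dotp (p i, 1 - p i) y \<le> dotp (p i, 1 - p i) (x i)"
          using opt_lo_suff[OF rp True, of y1 y2 c] y yy xi
          unfolding dotp_def nonneg2_def \<beta>_def c_def by simp
      qed (use xi nonneg rp in \<open>auto simp: dotp_def nonneg2_def \<beta>_def c_def\<close>)
    next
      case False2: False
      then have pr: "p i = r" using False by simp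
      then have "E \<noteq> {}" using i unfolding E_def by auto
      then have bud: "r * \<gamma> + (1 - r) * \<delta> = c" by (rule budgE)
      have xi: "x i = (\<gamma>, \<delta>)" using False False2 unfolding x_def by simp
      show ?thesis
      proof (intro conjI allI impI)
        fix y :: "real \<times> real" assume y: "nonneg2 y \<and> dotp (r, 1 - r) y \<le> 1 / real n"
        show "dotp (p i, 1 - p i) y \<le> dotp (p i, 1 - p i) (x i)"
          using y xi pr bud unfolding dotp_def c_def by simp
      qed (use xi nonneg bud in \<open>auto simp: dotp_def nonneg2_def c_def\<close>)
    qed
  qed
  have "parimutuel_eq n p (r, 1 - r) x"
    unfolding parimutuel_eq_def using cons tot s1 s2 r0 r1 by (auto simp: nonneg2_def)
  then show ?thesis by blast
qed


lemma len_filter_upt: "length (filter Q [a..<b]) = card {k\<in>{a..<b}. Q k}"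
proof -
  have "card (set (filter Q [a..<b])) = length (filter Q [a..<b])" by (rule distinct_card) simp
  moreover have "set (filter Q [a..<b]) = {k\<in>{a..<b}. Q k}" by auto
  ultimately show ?thesis by simp
qed

lemma count_L:
  "card {i. i < length (map p [1..<n+1] @ map f [1..<n]) \<and> P ((map p [1..<n+1] @ map f [1..<n]) ! i)}
    = card {i\<in>{1..n}. P (p i)} + card {k\<in>{1..<n}. P (f k)}"
proof -
  have "card {i. i < length (map p [1..<n+1] @ map f [1..<n]) \<and> P ((map p [1..<n+1] @ map f [1..<n]) ! i)}
     = length (filter P (map p [1..<n+1] @ map f [1..<n]))"
    by (rule length_filter_conv_card[symmetric])
  also have "\<dots> = length (filter (P \<circ> p) [1..<n+1]) + length (filter (P \<circ> f) [1..<n])"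
    by (simp add: filter_map)
  also have "\<dots> = card {i\<in>{1..<n+1}. P (p i)} + card {k\<in>{1..<n}. P (f k)}"
    by (simp only: len_filter_upt o_def)
  also have "{1..<n+1} = {1..n}" by auto
  finally show ?thesis .
qed

lemma star_imp_med:
  fixes n :: nat and p :: "nat \<Rightarrow> real" and r :: real
  assumes n1: "n \<ge> 1" and pb: "\<forall>i\<in>{1..n}. 0 \<le> p i \<and> p i \<le> 1"
    and r0: "0 \<le> r" and r1: "r \<le> 1"
    and ha: "real (card {i\<in>{1..n}. p i > r}) \<le> real n * r"
    and hb: "real (card {i\<in>{1..n}. p i < r}) \<le> real n * (1 - r)"
  shows "is_med (map p [1..<n+1] @ map (\<lambda>k. real k / real n) [1..<n]) r"
proof -
  define L where "L = map p [1..<n+1] @ map (\<lambda>k. real k / real n) [1..<n]"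
  define A where "A = {i\<in>{1..n}. p i > r}"
  define B where "B = {i\<in>{1..n}. p i < r}"
  have nn: "real n > 0" using n1 by simp
  have lenL: "(length L - 1) div 2 = n - 1" unfolding L_def using n1 by simp
  have finAB: "finite A" "finite B" unfolding A_def B_def by auto
  have "card A \<le> card {1..n}" unfolding A_def by (rule card_mono) auto
  then have Asub: "card A \<le> n" by simp
  have "card B \<le> card {1..n}" unfolding B_def by (rule card_mono) auto
  then have Bsub: "card B \<le> n" by simp
  have bn: "card B < n"
  proof (rule ccontr)
    assume "\<not> card B < n" then have "card B = n" using Bsub by simp
    then have "real n \<le> real n * (1 - r)" using hb unfolding B_def by simp
    then have "real n * r \<le> 0" by (simp add: algebra_simps)
    then have "r \<le> 0" using nn by (simp add: mult_le_0_iff)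
    then have "B = {}" unfolding B_def using pb r0 by force
    then show False using \<open>card B = n\<close> n1 by simp
  qed
  have an: "card A < n"
  proof (rule ccontr)
    assume "\<not> card A < n" then have "card A = n" using Asub by simp
    then have "real n \<le> real n * r" using ha unfolding A_def by simp
    then have "r \<ge> 1" using nn by (simp add: mult_le_cancel_left1)
    then have "A = {}" unfolding A_def using pb r1 by force
    then show False using \<open>card A = n\<close> n1 by simp
  qed
  have klt: "card {k\<in>{1..<n}. real k / real n < r} \<le> n - 1 - card B"
  proof -
    have "{k\<in>{1..<n}. real k / real n < r} \<subseteq> {1..<n - card B}"
    proof
      fix k assume "k \<in> {k\<in>{1..<n}. real k / real n < r}"
      then have k: "1 \<le> k" "real k / real n < r" by auto
      then have "real k < real n * r" using nn by (simp add: divide_less_eq mult.commute)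
      also have "\<dots> \<le> real n - real (card B)" using hb unfolding B_def by (simp add: algebra_simps)
      finally have "k < n - card B" using bn by linarith
      then show "k \<in> {1..<n - card B}" using k by simp
    qed
    then have "card {k\<in>{1..<n}. real k / real n < r} \<le> card {1..<n - card B}"
      by (rule card_mono[rotated]) simp
    then show ?thesis by simp
  qed
  have kgt: "card {k\<in>{1..<n}. real k / real n > r} \<le> n - 1 - card A"
  proof -
    have "{k\<in>{1..<n}. real k / real n > r} \<subseteq> {card A + 1..<n}"
    proof
      fix k assume "k \<in> {k\<in>{1..<n}. real k / real n > r}"
      then have k: "k < n" "real k / real n > r" by auto
      then have "real k > real n * r" using nn by (simp add: less_divide_eq mult.commute)
      then have "real k > real (card A)" using ha unfolding A_def by linarith
      then show "k \<in> {card A + 1..<n}" using k by simp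
    qed
    then have "card {k\<in>{1..<n}. real k / real n > r} \<le> card {card A + 1..<n}"
      by (rule card_mono[rotated]) simp
    then show ?thesis by simp
  qed
  have c1: "card {i. i < length L \<and> L ! i < r} \<le> (length L - 1) div 2"
    using count_L[where p=p and n=n and f="\<lambda>k. real k / real n" and P="\<lambda>x. x < r"] klt bn lenL
    unfolding B_def L_def by simp
  have c2: "card {i. i < length L \<and> L ! i > r} \<le> (length L - 1) div 2"
    using count_L[where p=p and n=n and f="\<lambda>k. real k / real n" and P="\<lambda>x. x > r"] kgt an lenL
    unfolding A_def L_def by simp
  have mem: "r \<in> set L"
  proof (cases "\<exists>i\<in>{1..n}. p i = r")
    case True
    then obtain i where "i \<in> {1..n}" "p i = r" by blast
    then have "i \<in> set [1..<n+1]" "p i = r" by auto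
    then have "r \<in> p ` set [1..<n+1]" by (intro image_eqI[where x=i]) simp_all
    then have "r \<in> set (map p [1..<n+1])" by (simp only: set_map)
    then show ?thesis unfolding L_def set_append by blast
  next
    case False
    then have un: "{1..n} = A \<union> B" unfolding A_def B_def by force
    have "A \<inter> B = {}" unfolding A_def B_def by auto
    then have "card A + card B = n" using finAB card_Un_disjoint[of A B] un[symmetric] by simp
    then have "real n * r = real (card A)" using ha hb unfolding A_def B_def by (simp add: algebra_simps)
    then have rr: "r = real (card A) / real n" using nn by (simp add: field_simps)
    have "card A \<ge> 1" using bn \<open>card A + card B = n\<close> by simp
    then have "card A \<in> {1..<n}" using an by simp
    then have "card A \<in> set [1..<n]" by simp
    then have "r \<in> (\<lambda>k. real k / real n) ` set [1..<n]" using rr by (intro image_eqI[where x="card A"]) simp_all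
    then have "r \<in> set (map (\<lambda>k. real k / real n) [1..<n])" by (simp only: set_map)
    then show ?thesis unfolding L_def set_append by blast
  qed
  show ?thesis using c1 c2 mem unfolding is_med_def L_def by blast
qed


lemma med_imp_star:
  fixes n :: nat and p :: "nat \<Rightarrow> real" and r :: real
  assumes n1: "n \<ge> 1" and pb: "\<forall>i\<in>{1..n}. 0 \<le> p i \<and> p i \<le> 1"
    and med: "is_med (map p [1..<n+1] @ map (\<lambda>k. real k / real n) [1..<n]) r"
  shows "0 \<le> r \<and> r \<le> 1 \<and> real (card {i\<in>{1..n}. p i > r}) \<le> real n * r
    \<and> real (card {i\<in>{1..n}. p i < r}) \<le> real n * (1 - r)"
proof -
  define L where "L = map p [1..<n+1] @ map (\<lambda>k. real k / real n) [1..<n]"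
  define A where "A = {i\<in>{1..n}. p i > r}"
  define B where "B = {i\<in>{1..n}. p i < r}"
  have nn: "real n > 0" using n1 by simp
  have lenL: "(length L - 1) div 2 = n - 1" unfolding L_def using n1 by simp
  have "card A \<le> card {1..n}" unfolding A_def by (rule card_mono) auto
  then have Asub: "card A \<le> n" by simp
  have "card B \<le> card {1..n}" unfolding B_def by (rule card_mono) auto
  then have Bsub: "card B \<le> n" by simp
  have mem: "r \<in> set L" and c1: "card {i. i < length L \<and> L ! i < r} \<le> (length L - 1) div 2"
    and c2: "card {i. i < length L \<and> L ! i > r} \<le> (length L - 1) div 2"
    using med unfolding is_med_def L_def by auto
  have c1': "card B + card {k\<in>{1..<n}. real k / real n < r} \<le> n - 1"
    using count_L[where p=p and n=n and f="\<lambda>k. real k / real n" and P="\<lambda>x. x < r"] c1 lenL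
    unfolding B_def L_def by simp
  have c2': "card A + card {k\<in>{1..<n}. real k / real n > r} \<le> n - 1"
    using count_L[where p=p and n=n and f="\<lambda>k. real k / real n" and P="\<lambda>x. x > r"] c2 lenL
    unfolding A_def L_def by simp
  have rr: "0 \<le> r \<and> r \<le> 1"
  proof -
    have "r \<in> set (map p [1..<n+1]) \<or> r \<in> set (map (\<lambda>k. real k / real n) [1..<n])"
      using mem unfolding L_def by simp
    then show ?thesis
    proof
      assume "r \<in> set (map p [1..<n+1])"
      then obtain i where "i \<in> set [1..<n+1]" "r = p i" by auto
      then show ?thesis using pb by auto
    next
      assume "r \<in> set (map (\<lambda>k. real k / real n) [1..<n])"
      then obtain k where "k \<in> set [1..<n]" "r = real k / real n" by auto
      then show ?thesis using nn by (simp add: divide_le_eq)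
    qed
  qed
  have ha: "real (card A) \<le> real n * r"
  proof (rule ccontr)
    assume "\<not> ?thesis" then have h: "real (card A) > real n * r" by simp
    have "real n * r \<ge> 0" using rr by simp
    then have a1: "card A \<ge> 1" using h by linarith
    have "{card A..<n} \<subseteq> {k\<in>{1..<n}. real k / real n > r}"
    proof
      fix k assume k: "k \<in> {card A..<n}"
      then have "real k \<ge> real (card A)" by simp
      then have "real k > real n * r" using h by linarith
      then have "real k / real n > r" using nn by (simp add: less_divide_eq mult.commute)
      then show "k \<in> {k\<in>{1..<n}. real k / real n > r}" using k a1 by simp
    qed
    then have "card {card A..<n} \<le> card {k\<in>{1..<n}. real k / real n > r}"
      by (rule card_mono[rotated]) simp
    then show False using c2' Asub n1 by simp
  qed
  have hb: "real (card B) \<le> real n * (1 - r)"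
  proof (rule ccontr)
    assume "\<not> ?thesis" then have h: "real (card B) > real n * (1 - r)" by simp
    have "real n * (1 - r) \<ge> 0" using rr by simp
    then have b1: "card B \<ge> 1" using h by linarith
    have "{1..n - card B} \<subseteq> {k\<in>{1..<n}. real k / real n < r}"
    proof
      fix k assume k: "k \<in> {1..n - card B}"
      then have "real k \<le> real n - real (card B)" using Bsub by auto
      then have "real k < real n * r" using h by (simp add: algebra_simps)
      then have "real k / real n < r" using nn by (simp add: divide_less_eq mult.commute)
      then show "k \<in> {k\<in>{1..<n}. real k / real n < r}" using k b1 by auto
    qed
    then have "card {1..n - card B} \<le> card {k\<in>{1..<n}. real k / real n < r}"
      by (rule card_mono[rotated]) simp
    then show False using c1' Bsub b1 n1 by simp
  qed
  show ?thesis using rr ha hb unfolding A_def B_def by simp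
qed


theorem proposition4:
  fixes n :: nat and p :: "nat \<Rightarrow> real"
  assumes "n \<ge> 1"
    and "\<forall>i\<in>{1..n}. 0 \<le> p i \<and> p i \<le> 1"
  shows "(\<exists>\<rho> x. parimutuel_eq n p \<rho> x)
    \<and> (\<forall>\<rho> x. parimutuel_eq n p \<rho> x \<longrightarrow>
         fst \<rho> = med (map p [1..<n+1] @ map (\<lambda>k. real k / real n) [1..<n]))"
proof
  define L where "L = map p [1..<n+1] @ map (\<lambda>k. real k / real n) [1..<n]"
  have lenL: "length L = 2 * (n - 1) + 1" unfolding L_def using assms(1) by simp
  have oddL: "odd (length L)" using lenL by simp
  have "is_med L (sort L ! (n - 1))" using lenL by (rule med_exists)
  then have st: "0 \<le> sort L ! (n - 1) \<and> sort L ! (n - 1) \<le> 1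
    \<and> real (card {i\<in>{1..n}. p i > sort L ! (n - 1)}) \<le> real n * sort L ! (n - 1)
    \<and> real (card {i\<in>{1..n}. p i < sort L ! (n - 1)}) \<le> real n * (1 - sort L ! (n - 1))"
    using med_imp_star[OF assms] unfolding L_def by blast
  then have "\<exists>x. parimutuel_eq n p (sort L ! (n - 1), 1 - sort L ! (n - 1)) x"
    using star_imp_eq[OF assms] by blast
  then show "\<exists>\<rho> x. parimutuel_eq n p \<rho> x" by blast
next
  show "\<forall>\<rho> x. parimutuel_eq n p \<rho> x \<longrightarrow>
         fst \<rho> = med (map p [1..<n+1] @ map (\<lambda>k. real k / real n) [1..<n])"
  proof (intro allI impI)
    fix \<rho> x assume eq: "parimutuel_eq n p \<rho> x"
    define L where "L = map p [1..<n+1] @ map (\<lambda>k. real k / real n) [1..<n]"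
    have lenL: "length L = 2 * (n - 1) + 1" unfolding L_def using assms(1) by simp
    have oddL: "odd (length L)" using lenL by simp
    have st: "0 \<le> fst \<rho> \<and> fst \<rho> \<le> 1
      \<and> real (card {i\<in>{1..n}. p i > fst \<rho>}) \<le> real n * fst \<rho>
      \<and> real (card {i\<in>{1..n}. p i < fst \<rho>}) \<le> real n * (1 - fst \<rho>)"
      using eq_imp_star[OF assms eq] .
    have m: "is_med L (fst \<rho>)"
      unfolding L_def using star_imp_med[OF assms] st by blast
    have "med L = fst \<rho>"
      unfolding med_def
    proof (rule the_equality)
      show "is_med L (fst \<rho>)" by (rule m)
    next
      fix v assume "is_med L v" then show "v = fst \<rho>" using med_unique m oddL by blast
    qed
    then show "fst \<rho> = med (map p [1..<n+1] @ map (\<lambda>k. real k / real n) [1..<n])"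
      unfolding L_def by simp
  qed
qed

end
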